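(* For $i=1,\dots,d$ let $\omega_i\subseteq\mathbb{R}$ be a nonempty open interval and $f_i:\omega_i\to\mathbb{R}$ a univariate function of Legendre type; let $\Omega=\prod_{i=1}^d\omega_i$ and $F(x)=\sum_{i=1}^d f_i(x_i)$, with Bregman divergence $D_F$. Let $A=\prod_{i=1}^d[a_i,b_i]$ be an axis-aligned box with $A\cap\Omega\neq\emptyset$, let $q\in\Omega$, and let $p$ be the Euclidean projection of $q$ onto $A$, i.e. $p_i=\min(\max(q_i,a_i),b_i)$. Then the Bregman projection divergence of $q$ onto $A$ satisfies $$\inf_{x\in A\cap\Omega} D_F(q\|x)=\sum_{i=1}^d D_{f_i}(q_i\|p_i)=D_F(q\|p).$$
   Context: A function $G:U\to\mathbb{R}$ on a nonempty open convex set $U$ is of Legendre type if it is differentiable, strictly convex, and, if $\partial U\neq\emptyset$, $\|\nabla G(x)\|\to\infty$ as $x\to\partial U$. The Bregman divergence generated by $G$ is $D_G(x\|y)=G(x)-G(y)-\langle\nabla G(y),x-y\rangle$; for univariate $f_i$ this is $D_{f_i}(s\|t)=f_i(s)-f_i(t)-f_i'(t)(s-t)$. *)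

theory Defs
  imports "HOL-Analysis.Analysis"
begin

definition strict_convex_on :: "'a::real_vector set \<Rightarrow> ('a \<Rightarrow> real) \<Rightarrow> bool" where
  "strict_convex_on U G \<longleftrightarrow> convex U \<and>
     (\<forall>x\<in>U. \<forall>y\<in>U. x \<noteq> y \<longrightarrow> (\<forall>t::real. 0 < t \<and> t < 1 \<longrightarrow>
        G ((1 - t) *\<^sub>R x + t *\<^sub>R y) < (1 - t) * G x + t * G y))"

definition legendre_type1 :: "real set \<Rightarrow> (real \<Rightarrow> real) \<Rightarrow> bool" where
  "legendre_type1 U G \<longleftrightarrow> U \<noteq> {} \<and> open U \<and> convex U \<and>
     (\<forall>x\<in>U. G differentiable (at x)) \<and> strict_convex_on U G \<and>
     (\<forall>z\<in>frontier U. filterlim (\<lambda>x. \<bar>deriv G x\<bar>) at_top (at z within U))"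

definition bregman :: "('a::real_normed_vector \<Rightarrow> real) \<Rightarrow> 'a \<Rightarrow> 'a \<Rightarrow> real" where
  "bregman G x y = G x - G y - frechet_derivative G (at y) (x - y)"

definition bregman1 :: "(real \<Rightarrow> real) \<Rightarrow> real \<Rightarrow> real \<Rightarrow> real" where
  "bregman1 f s t = f s - f t - deriv f t * (s - t)"

end

theory Submission
  imports Defs
begin

lemma leg_convex_on:
  assumes "legendre_type1 U f"
  shows "convex_on U f"
proof (rule convex_onI)
  show "convex U" using assms unfolding legendre_type1_def by auto
next
  fix t x y assume t: "(0::real) < t" "t < 1" and xy: "x \<in> U" "y \<in> U"
  show "f ((1 - t) *\<^sub>R x + t *\<^sub>R y) \<le> (1 - t) * f x + t * f y"
  proof (cases "x = y")
    case True
    have "(1 - t) *\<^sub>R y + t *\<^sub>R y = y" by (simp add: algebra_simps)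
    then show ?thesis using True by (simp add: algebra_simps)
  next
    case False
    then show ?thesis using assms t xy unfolding legendre_type1_def strict_convex_on_def
      by (meson less_imp_le)
  qed
qed

lemma leg_deriv:
  assumes "legendre_type1 U f" "c \<in> U"
  shows "(f has_field_derivative deriv f c) (at c)"
  using assms unfolding legendre_type1_def
  by (simp add: DERIV_deriv_iff_real_differentiable)

lemma leg_tangent:
  assumes L: "legendre_type1 U f" and x: "x \<in> U" and c: "c \<in> U"
  shows "deriv f c * (x - c) \<le> f x - f c"
proof -
  have o: "open U" and cv: "convex U" using L unfolding legendre_type1_def by auto
  show ?thesis
  proof (rule convex_on_imp_above_tangent[OF leg_convex_on[OF L]])
    show "connected U" using cv by (simp add: convex_connected)
    show "c \<in> interior U" using o c by (simp add: interior_open)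
    show "x \<in> U" by fact
    show "(f has_field_derivative deriv f c) (at c within U)"
      using leg_deriv[OF L c] by (rule has_field_derivative_at_within)
  qed
qed

lemma leg_mono:
  assumes L: "legendre_type1 U f" and x: "x \<in> U" and y: "y \<in> U" and xy: "x \<le> y"
  shows "deriv f x \<le> deriv f y"
proof -
  have 1: "deriv f x * (y - x) \<le> f y - f x" by (rule leg_tangent[OF L y x])
  have 2: "deriv f y * (x - y) \<le> f x - f y" by (rule leg_tangent[OF L x y])
  have "(deriv f y - deriv f x) * (y - x) \<ge> 0" using 1 2 by (simp add: algebra_simps)
  show ?thesis
  proof (cases "x = y")
    case False
    with xy have "y - x > 0" by simp
    with \<open>(deriv f y - deriv f x) * (y - x) \<ge> 0\<close> show ?thesis
      by (simp add: zero_le_mult_iff)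
  qed simp
qed

lemma leg_min:
  assumes L: "legendre_type1 U f" and s: "s \<in> U" and t: "t \<in> U" and p: "p \<in> U"
    and ab: "a \<le> t" "t \<le> b" and pdef: "p = min (max s a) b"
  shows "bregman1 f s p \<le> bregman1 f s t"
proof -
  have key: "bregman1 f s t - bregman1 f s p = bregman1 f p t + (deriv f p - deriv f t) * (s - p)"
    unfolding bregman1_def by (simp add: algebra_simps)
  have Dpt: "bregman1 f p t \<ge> 0" using leg_tangent[OF L p t] unfolding bregman1_def by simp
  have "(deriv f p - deriv f t) * (s - p) \<ge> 0"
  proof (cases "s < a")
    case True
    then have "p \<le> t" "s - p \<le> 0" using pdef ab by auto
    then have "deriv f p \<le> deriv f t" using leg_mono[OF L p t] by simp
    with \<open>s - p \<le> 0\<close> show ?thesis by (simp add: mult_nonpos_nonpos)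
  next
    case False
    show ?thesis
    proof (cases "s > b")
      case True
      then have "t \<le> p" "s - p \<ge> 0" using pdef ab False by auto
      then have "deriv f t \<le> deriv f p" using leg_mono[OF L t p] by simp
      with \<open>s - p \<ge> 0\<close> show ?thesis by simp
    next
      case False2: False
      then have "p = s" using pdef False by auto
      then show ?thesis by simp
    qed
  qed
  then show ?thesis using key Dpt by linarith
qed

lemma F_deriv:
  fixes f :: "'n::finite \<Rightarrow> real \<Rightarrow> real" and x :: "real ^ 'n"
  assumes "\<And>i. (f i has_field_derivative D i) (at (x $ i))"
  shows "((\<lambda>x. \<Sum>i\<in>UNIV. f i (x $ i)) has_derivative (\<lambda>h. \<Sum>i\<in>UNIV. D i * h $ i)) (at x)"
proof (rule has_derivative_sum)
  fix i :: 'n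
  have "((\<lambda>x. x $ i) has_derivative (\<lambda>h. h $ i)) (at x)"
    using bounded_linear_vec_nth[of i] by (rule bounded_linear_imp_has_derivative)
  from has_derivative_compose[OF this has_field_derivative_imp_has_derivative[OF assms[of i]]]
  show "((\<lambda>x. f i (x $ i)) has_derivative (\<lambda>h. D i * h $ i)) (at x)"
    by (simp add: o_def mult.commute)
qed

lemma bregman_sum:
  fixes f :: "'n::finite \<Rightarrow> real \<Rightarrow> real" and x q :: "real ^ 'n"
  assumes "\<And>i. legendre_type1 (\<omega> i) (f i)" "\<forall>i. x $ i \<in> \<omega> i"
  shows "bregman (\<lambda>x::real ^ 'n. \<Sum>i\<in>UNIV. f i (x $ i)) q x = (\<Sum>i\<in>UNIV. bregman1 (f i) (q $ i) (x $ i))"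
proof -
  have "((\<lambda>x. \<Sum>i\<in>UNIV. f i (x $ i)) has_derivative (\<lambda>h. \<Sum>i\<in>UNIV. deriv (f i) (x $ i) * h $ i)) (at x)"
    by (rule F_deriv) (use leg_deriv assms in blast)
  from frechet_derivative_at[OF this, symmetric] show ?thesis
    unfolding bregman_def bregman1_def by (simp add: sum_subtractf)
qed

theorem corollary1:
  fixes \<omega> :: "'n::finite \<Rightarrow> real set"
    and f :: "'n \<Rightarrow> real \<Rightarrow> real"
    and a b q :: "real ^ 'n"
  assumes intervals: "\<And>i. is_interval (\<omega> i) \<and> open (\<omega> i) \<and> \<omega> i \<noteq> {}"
    and legendre: "\<And>i. legendre_type1 (\<omega> i) (f i)"
    and meet: "{x. \<forall>i. a $ i \<le> x $ i \<and> x $ i \<le> b $ i} \<inter> {x. \<forall>i. x $ i \<in> \<omega> i} \<noteq> {}"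
    and q: "\<forall>i. q $ i \<in> \<omega> i"
  shows "(let \<Omega> = {x. \<forall>i. x $ i \<in> \<omega> i};
              A = {x. \<forall>i. a $ i \<le> x $ i \<and> x $ i \<le> b $ i};
              F = (\<lambda>x::real ^ 'n. \<Sum>i\<in>UNIV. f i (x $ i));
              p = (\<chi> i. min (max (q $ i) (a $ i)) (b $ i))
          in (INF x\<in>A \<inter> \<Omega>. bregman F q x) = (\<Sum>i\<in>UNIV. bregman1 (f i) (q $ i) (p $ i))
             \<and> (\<Sum>i\<in>UNIV. bregman1 (f i) (q $ i) (p $ i)) = bregman F q p)"
proof -
  define \<Omega> where "\<Omega> = {x::real^'n. \<forall>i. x $ i \<in> \<omega> i}"
  define A where "A = {x::real^'n. \<forall>i. a $ i \<le> x $ i \<and> x $ i \<le> b $ i}"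
  define F where "F = (\<lambda>x::real ^ 'n. \<Sum>i\<in>UNIV. f i (x $ i))"
  define p where "p = (\<chi> i. min (max (q $ i) (a $ i)) (b $ i))"
  obtain y where y: "y \<in> A" "y \<in> \<Omega>" using meet unfolding A_def \<Omega>_def by blast
  have pA: "p \<in> A" unfolding A_def
  proof (intro CollectI allI)
    fix i have "a $ i \<le> b $ i" using y(1) unfolding A_def by (auto intro: order_trans)
    then show "a $ i \<le> p $ i \<and> p $ i \<le> b $ i" unfolding p_def by simp
  qed
  have pO: "p \<in> \<Omega>"
    unfolding \<Omega>_def
  proof (intro CollectI allI)
    fix i
    have iv: "is_interval (\<omega> i)" using intervals by auto
    have yi: "y $ i \<in> \<omega> i" using y(2) unfolding \<Omega>_def by auto
    have ab: "a $ i \<le> y $ i" "y $ i \<le> b $ i" using y(1) unfolding A_def by auto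
    have "min (q $ i) (y $ i) \<le> p $ i \<and> p $ i \<le> max (q $ i) (y $ i)"
      unfolding p_def using ab by (auto simp: min_def max_def)
    then show "p $ i \<in> \<omega> i"
    proof (cases "q $ i \<le> y $ i")
      case True
      then have "q $ i \<le> p $ i" "p $ i \<le> y $ i"
        using \<open>min (q $ i) (y $ i) \<le> p $ i \<and> p $ i \<le> max (q $ i) (y $ i)\<close> by auto
      then show ?thesis using iv yi q unfolding is_interval_1 by blast
    next
      case False
      then have "y $ i \<le> p $ i" "p $ i \<le> q $ i"
        using \<open>min (q $ i) (y $ i) \<le> p $ i \<and> p $ i \<le> max (q $ i) (y $ i)\<close> by auto
      then show ?thesis using iv yi q unfolding is_interval_1 by blast
    qed
  qed
  have eq2: "(\<Sum>i\<in>UNIV. bregman1 (f i) (q $ i) (p $ i)) = bregman F q p"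
    unfolding F_def using bregman_sum[where f=f and \<omega>=\<omega> and x=p and q=q, OF legendre] pO unfolding \<Omega>_def by auto
  have eq1: "(INF x\<in>A \<inter> \<Omega>. bregman F q x) = bregman F q p"
  proof (rule cInf_eq_minimum)
    show "bregman F q p \<in> (\<lambda>x. bregman F q x) ` (A \<inter> \<Omega>)" using pA pO by auto
  next
    fix z assume "z \<in> (\<lambda>x. bregman F q x) ` (A \<inter> \<Omega>)"
    then obtain x where x: "x \<in> A" "x \<in> \<Omega>" "z = bregman F q x" by auto
    have "bregman F q p = (\<Sum>i\<in>UNIV. bregman1 (f i) (q $ i) (p $ i))" using eq2 by simp
    also have "\<dots> \<le> (\<Sum>i\<in>UNIV. bregman1 (f i) (q $ i) (x $ i))"
    proof (rule sum_mono)
      fix i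
      show "bregman1 (f i) (q $ i) (p $ i) \<le> bregman1 (f i) (q $ i) (x $ i)"
        apply (rule leg_min[OF legendre, where a="a $ i" and b="b $ i"])
        using x pO q unfolding A_def \<Omega>_def p_def by auto
    qed
    also have "\<dots> = z" using x bregman_sum[where f=f and \<omega>=\<omega> and x=x and q=q, OF legendre] unfolding F_def \<Omega>_def by auto
    finally show "bregman F q p \<le> z" .
  qed
  show ?thesis
    unfolding Let_def \<Omega>_def[symmetric] A_def[symmetric] F_def[symmetric] p_def[symmetric]
    using eq1 eq2 by simp
qed

end
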